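(* If $\Phi=(\varphi_n)_{n\in\mathbb{N}}$ is a depth-bounded fuzzy bisimulation between fuzzy automata $\mathcal{A}$ and $\mathcal{A}'$, then for every $n\in\mathbb{N}$ and every $\alpha\in\mathcal{F}^n_{\leftrightarrow}$: $\varphi_n^{-1}\circ\alpha^{\mathcal{A}}\le\alpha^{\mathcal{A}'}$ and $\varphi_n\circ\alpha^{\mathcal{A}'}\le\alpha^{\mathcal{A}}$. Consequently $\varphi_n(x,x')\le\bigwedge_{\alpha\in\mathcal{F}^n_{\leftrightarrow}}(\alpha^{\mathcal{A}}(x)\Leftrightarrow\alpha^{\mathcal{A}'}(x'))$ for all $(x,x')\in A\times A'$.
   Context: $\mathcal{L}=\langle L,\le,\otimes,\Rightarrow,0,1\rangle$ is a complete residuated lattice: $\langle L,\le,0,1\rangle$ is a complete lattice with least element $0$ and greatest element $1$, $\langle L,\otimes,1\rangle$ is a commutative monoid, and $x\otimes y\le z$ iff $x\le (y\Rightarrow z)$; $x\Leftrightarrow y=(x\Rightarrow y)\wedge(y\Rightarrow x)$. Fuzzy relations are maps into $L$ ordered pointwise; $\varphi^{-1}(b,a)=\varphi(a,b)$; $(\varphi\circ\psi)(a,c)=\bigvee_b\varphi(a,b)\otimes\psi(b,c)$, $(\varphi\circ g)(a)=\bigvee_b\varphi(a,b)\otimes g(b)$. A fuzzy automaton over $\Sigma$ is $\mathcal{A}=\langle A,\delta^{\mathcal{A}},\sigma^{\mathcal{A}},\tau^{\mathcal{A}}\rangle$ with $A$ nonempty, $\delta^{\mathcal{A}}:A\times\Sigma\times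 A\to L$, $\sigma^{\mathcal{A}},\tau^{\mathcal{A}}:A\to L$; $\delta^{\mathcal{A}}_s(x,y)=\delta^{\mathcal{A}}(x,s,y)$; similarly $\mathcal{A}'$ with states $A'$. The sets $\mathcal{F}^n_{\leftrightarrow}$ are the smallest sets of formulas with: $\tau\in\mathcal{F}^n_{\leftrightarrow}$; $s\in\Sigma,\alpha\in\mathcal{F}^n_{\leftrightarrow}\Rightarrow(s\circ\alpha)\in\mathcal{F}^{n+1}_{\leftrightarrow}$; $a\in L,\alpha\in\mathcal{F}^n_{\leftrightarrow}\Rightarrow(a\leftrightarrow\alpha)\in\mathcal{F}^n_{\leftrightarrow}$; $\alpha,\beta\in\mathcal{F}^n_{\leftrightarrow}\Rightarrow(\alpha\wedge\beta)\in\mathcal{F}^n_{\leftrightarrow}$. Semantics: $\tau^{\mathcal{A}}$ is the terminal fuzzy set; $(s\circ\alpha)^{\mathcal{A}}=\delta^{\mathcal{A}}_s\circ\alpha^{\mathcal{A}}$; $(a\leftrightarrow\alpha)^{\mathcal{A}}(x)=a\Leftrightarrow\alpha^{\mathcal{A}}(x)$; $(\alpha\wedge\beta)^{\mathcal{A}}(x)=\alpha^{\mathcal{A}}(x)\wedge\beta^{\mathcal{A}}(x)$. A depth-bounded fuzzy bisimulation between $\mathcal{A}$ and $\mathcal{A}'$ is a sequence $(\varphi_n)_{n\in\mathbb{N}}$ of fuzzy relations $A\times A'\to L$ with $\varphi_n\le\varphi_{n-1}$ ($n\ge1$), $\varphi_0^{-1}\circ\tau^{\mathcal{A}}\le\tau^{\mathcal{A}'}$,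 $\varphi_0\circ\tau^{\mathcal{A}'}\le\tau^{\mathcal{A}}$, and for all $s\in\Sigma,n\ge1$: $\varphi_n^{-1}\circ\delta^{\mathcal{A}}_s\le\delta^{\mathcal{A}'}_s\circ\varphi_{n-1}^{-1}$ and $\varphi_n\circ\delta^{\mathcal{A}'}_s\le\delta^{\mathcal{A}}_s\circ\varphi_{n-1}$. *)

theory Defs
  imports Main
begin

definition complete_residuated_lattice ::
  "('l::complete_lattice \<Rightarrow> 'l \<Rightarrow> 'l) \<Rightarrow> ('l \<Rightarrow> 'l \<Rightarrow> 'l) \<Rightarrow> bool" where
  "complete_residuated_lattice otimes imp \<longleftrightarrow>
     (\<forall>x y z. otimes (otimes x y) z = otimes x (otimes y z)) \<and>
     (\<forall>x y. otimes x y = otimes y x) \<and>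
     (\<forall>x. otimes x top = x) \<and>
     (\<forall>x y z. otimes x y \<le> z \<longleftrightarrow> x \<le> imp y z)"

definition biimp :: "('l::complete_lattice \<Rightarrow> 'l \<Rightarrow> 'l) \<Rightarrow> 'l \<Rightarrow> 'l \<Rightarrow> 'l" where
  "biimp imp x y = inf (imp x y) (imp y x)"

definition rel_comp ::
  "('l::complete_lattice \<Rightarrow> 'l \<Rightarrow> 'l) \<Rightarrow> ('a \<Rightarrow> 'b \<Rightarrow> 'l) \<Rightarrow> ('b \<Rightarrow> 'c \<Rightarrow> 'l) \<Rightarrow> 'a \<Rightarrow> 'c \<Rightarrow> 'l" where
  "rel_comp otimes R S a c = (SUP b. otimes (R a b) (S b c))"

definition rel_set_comp ::
  "('l::complete_lattice \<Rightarrow> 'l \<Rightarrow> 'l) \<Rightarrow> ('a \<Rightarrow> 'b \<Rightarrow> 'l) \<Rightarrow> ('b \<Rightarrow> 'l) \<Rightarrow> 'a \<Rightarrow> 'l" where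
  "rel_set_comp otimes R g a = (SUP b. otimes (R a b) (g b))"

definition conv :: "('a \<Rightarrow> 'b \<Rightarrow> 'l) \<Rightarrow> 'b \<Rightarrow> 'a \<Rightarrow> 'l" where
  "conv R b a = R a b"

datatype ('l, 's) fformula =
    Tau
  | Comp 's "('l, 's) fformula"
  | Biimp 'l "('l, 's) fformula"
  | Conj "('l, 's) fformula" "('l, 's) fformula"

inductive in_F :: "nat \<Rightarrow> ('l, 's) fformula \<Rightarrow> bool" where
  tau: "in_F n Tau"
| comp: "in_F n \<alpha> \<Longrightarrow> in_F (Suc n) (Comp s \<alpha>)"
| biimp: "in_F n \<alpha> \<Longrightarrow> in_F n (Biimp a \<alpha>)"
| conj: "in_F n \<alpha> \<Longrightarrow> in_F n \<beta> \<Longrightarrow> in_F n (Conj \<alpha> \<beta>)"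

fun sem :: "('l::complete_lattice \<Rightarrow> 'l \<Rightarrow> 'l) \<Rightarrow> ('l \<Rightarrow> 'l \<Rightarrow> 'l) \<Rightarrow>
    ('a \<Rightarrow> 's \<Rightarrow> 'a \<Rightarrow> 'l) \<Rightarrow> ('a \<Rightarrow> 'l) \<Rightarrow> ('l, 's) fformula \<Rightarrow> 'a \<Rightarrow> 'l" where
  "sem otimes imp delta tau Tau = tau"
| "sem otimes imp delta tau (Comp s \<alpha>) =
     rel_set_comp otimes (\<lambda>x y. delta x s y) (sem otimes imp delta tau \<alpha>)"
| "sem otimes imp delta tau (Biimp a \<alpha>) = (\<lambda>x. biimp imp a (sem otimes imp delta tau \<alpha> x))"
| "sem otimes imp delta tau (Conj \<alpha> \<beta>) =
     (\<lambda>x. inf (sem otimes imp delta tau \<alpha> x) (sem otimes imp delta tau \<beta> x))"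

definition depth_bounded_bisim ::
  "('l::complete_lattice \<Rightarrow> 'l \<Rightarrow> 'l) \<Rightarrow> ('a \<Rightarrow> 's \<Rightarrow> 'a \<Rightarrow> 'l) \<Rightarrow> ('a \<Rightarrow> 'l) \<Rightarrow>
    ('b \<Rightarrow> 's \<Rightarrow> 'b \<Rightarrow> 'l) \<Rightarrow> ('b \<Rightarrow> 'l) \<Rightarrow> (nat \<Rightarrow> 'a \<Rightarrow> 'b \<Rightarrow> 'l) \<Rightarrow> bool" where
  "depth_bounded_bisim otimes delta tau delta' tau' phi \<longleftrightarrow>
     (\<forall>n. phi (Suc n) \<le> phi n) \<and>
     rel_set_comp otimes (conv (phi 0)) tau \<le> tau' \<and>
     rel_set_comp otimes (phi 0) tau' \<le> tau \<and>
     (\<forall>s n. n \<ge> 1 \<longrightarrow>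
        rel_comp otimes (conv (phi n)) (\<lambda>x y. delta x s y)
          \<le> rel_comp otimes (\<lambda>x y. delta' x s y) (conv (phi (n - 1))) \<and>
        rel_comp otimes (phi n) (\<lambda>x y. delta' x s y)
          \<le> rel_comp otimes (\<lambda>x y. delta x s y) (phi (n - 1)))"

end

theory Submission
  imports Defs
begin

lemma crl_adj: "complete_residuated_lattice ot im \<Longrightarrow> ot x y \<le> z \<longleftrightarrow> x \<le> im y z"
  by (simp add: complete_residuated_lattice_def)
lemma crl_comm: "complete_residuated_lattice ot im \<Longrightarrow> ot x y = ot y x"
  by (simp add: complete_residuated_lattice_def)
lemma crl_assoc: "complete_residuated_lattice ot im \<Longrightarrow> ot (ot x y) z = ot x (ot y z)"
  unfolding complete_residuated_lattice_def by blast

lemma crl_mono1: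
  assumes C: "complete_residuated_lattice ot im" and "x \<le> y" shows "ot x z \<le> ot y z"
proof -
  have "y \<le> im z (ot y z)" using crl_adj[OF C] by blast
  then show ?thesis using assms(2) crl_adj[OF C] order_trans by metis
qed

lemma crl_mono2:
  assumes C: "complete_residuated_lattice ot im" and "x \<le> y" shows "ot z x \<le> ot z y"
  using crl_mono1[OF C assms(2)] crl_comm[OF C] by metis

lemma crl_sup:
  assumes C: "complete_residuated_lattice ot im"
  shows "ot x (SUP b. f b) \<le> (SUP b. ot x (f b))"
proof -
  have "\<And>b. f b \<le> im x (SUP b. ot x (f b))"
  proof -
    fix b
    have "ot (f b) x \<le> (SUP b. ot x (f b))"
      using crl_comm[OF C, of "f b" x] by (metis SUP_upper UNIV_I)
    then show "f b \<le> im x (SUP b. ot x (f b))" using crl_adj[OF C] by blast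
  qed
  then have "(SUP b. f b) \<le> im x (SUP b. ot x (f b))" by (rule SUP_least)
  then have "ot (SUP b. f b) x \<le> (SUP b. ot x (f b))" using crl_adj[OF C] by blast
  then show ?thesis using crl_comm[OF C] by metis
qed

lemma rsc_le: "rel_set_comp ot R g \<le> h \<longleftrightarrow> (\<forall>a b. ot (R a b) (g b) \<le> h a)"
  unfolding rel_set_comp_def le_fun_def by (auto intro: SUP_least order_trans[OF SUP_upper[OF UNIV_I]])

lemma phi_anti:
  assumes "\<forall>n. phi (Suc n) \<le> (phi n :: 'a \<Rightarrow> 'b \<Rightarrow> 'l::complete_lattice)"
  shows "m \<le> n \<Longrightarrow> phi n \<le> phi m"
proof (induction n)
  case 0 then show ?case by simp
next
  case (Suc n)
  then show ?case using assms by (metis le_Suc_eq order_trans order_refl)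
qed

lemma core:
  assumes C: "complete_residuated_lattice ot im"
    and B: "depth_bounded_bisim ot delta tau delta' tau' phi"
  shows "in_F n \<alpha> \<Longrightarrow> (\<forall>x x'. ot (phi n x x') (sem ot im delta tau \<alpha> x) \<le> sem ot im delta' tau' \<alpha> x' \<and>
            ot (phi n x x') (sem ot im delta' tau' \<alpha> x') \<le> sem ot im delta tau \<alpha> x)"
proof (induction rule: in_F.induct)
  case (tau n)
  have anti: "phi n \<le> phi 0" using phi_anti[of phi 0 n] B unfolding depth_bounded_bisim_def by auto
  have t1: "rel_set_comp ot (conv (phi 0)) tau \<le> tau'" and t2: "rel_set_comp ot (phi 0) tau' \<le> tau"
    using B unfolding depth_bounded_bisim_def by auto
  show ?case
  proof (intro allI conjI)
    fix x x'
    have "ot (phi n x x') (tau x) \<le> ot (phi 0 x x') (tau x)"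
      using anti crl_mono1[OF C] by (metis le_funD)
    also have "\<dots> \<le> tau' x'" using t1 unfolding rsc_le conv_def by auto
    finally show "ot (phi n x x') (sem ot im delta tau Tau x) \<le> sem ot im delta' tau' Tau x'" by simp
    have "ot (phi n x x') (tau' x') \<le> ot (phi 0 x x') (tau' x')"
      using anti crl_mono1[OF C] by (metis le_funD)
    also have "\<dots> \<le> tau x" using t2 unfolding rsc_le by auto
    finally show "ot (phi n x x') (sem ot im delta' tau' Tau x') \<le> sem ot im delta tau Tau x" by simp
  qed
next
  case (comp n \<alpha> s)
  have d1: "rel_comp ot (conv (phi (Suc n))) (\<lambda>x y. delta x s y)
          \<le> rel_comp ot (\<lambda>x y. delta' x s y) (conv (phi n))"
   and d2: "rel_comp ot (phi (Suc n)) (\<lambda>x y. delta' x s y)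
          \<le> rel_comp ot (\<lambda>x y. delta x s y) (phi n)"
    using B unfolding depth_bounded_bisim_def by (metis diff_Suc_1 le_add1 plus_1_eq_Suc)+
  let ?u = "sem ot im delta tau \<alpha>" and ?v = "sem ot im delta' tau' \<alpha>"
  show ?case
  proof (intro allI conjI)
    fix x x'
    have "ot (phi (Suc n) x x') (SUP y. ot (delta x s y) (?u y)) \<le> (SUP y. ot (phi (Suc n) x x') (ot (delta x s y) (?u y)))"
      by (rule crl_sup[OF C])
    also have "\<dots> \<le> (SUP y'. ot (delta' x' s y') (?v y'))"
    proof (rule SUP_least)
      fix y
      have "ot (phi (Suc n) x x') (delta x s y) \<le> rel_comp ot (conv (phi (Suc n))) (\<lambda>x y. delta x s y) x' y"
        unfolding rel_comp_def conv_def by (rule SUP_upper) simp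
      also have "\<dots> \<le> (SUP y'. ot (delta' x' s y') (phi n y y'))"
        using d1 unfolding rel_comp_def conv_def le_fun_def by blast
      finally have h: "ot (phi (Suc n) x x') (delta x s y) \<le> (SUP y'. ot (delta' x' s y') (phi n y y'))" .
      have "ot (phi (Suc n) x x') (ot (delta x s y) (?u y)) = ot (ot (phi (Suc n) x x') (delta x s y)) (?u y)"
        using crl_assoc[OF C] by metis
      also have "\<dots> \<le> ot (SUP y'. ot (delta' x' s y') (phi n y y')) (?u y)"
        by (rule crl_mono1[OF C h])
      also have "\<dots> = ot (?u y) (SUP y'. ot (delta' x' s y') (phi n y y'))" using crl_comm[OF C] by metis
      also have "\<dots> \<le> (SUP y'. ot (?u y) (ot (delta' x' s y') (phi n y y')))" by (rule crl_sup[OF C])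
      also have "\<dots> \<le> (SUP y'. ot (delta' x' s y') (?v y'))"
      proof (rule SUP_mono)
        fix y' show "\<exists>m\<in>UNIV. ot (?u y) (ot (delta' x' s y') (phi n y y')) \<le> ot (delta' x' s m) (?v m)"
        proof (intro bexI[of _ y'])
          have "ot (?u y) (ot (delta' x' s y') (phi n y y')) = ot (delta' x' s y') (ot (phi n y y') (?u y))"
            using crl_comm[OF C] crl_assoc[OF C] by metis
          also have "\<dots> \<le> ot (delta' x' s y') (?v y')"
            using comp.IH crl_mono2[OF C] by blast
          finally show "ot (?u y) (ot (delta' x' s y') (phi n y y')) \<le> ot (delta' x' s y') (?v y')" .
        qed simp
      qed
      finally show "ot (phi (Suc n) x x') (ot (delta x s y) (?u y)) \<le> (SUP y'. ot (delta' x' s y') (?v y'))" .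
    qed
    finally show "ot (phi (Suc n) x x') (sem ot im delta tau (Comp s \<alpha>) x) \<le> sem ot im delta' tau' (Comp s \<alpha>) x'"
      by (simp add: rel_set_comp_def)
  next
    fix x x'
    have "ot (phi (Suc n) x x') (SUP y'. ot (delta' x' s y') (?v y')) \<le> (SUP y'. ot (phi (Suc n) x x') (ot (delta' x' s y') (?v y')))"
      by (rule crl_sup[OF C])
    also have "\<dots> \<le> (SUP y. ot (delta x s y) (?u y))"
    proof (rule SUP_least)
      fix y'
      have "ot (phi (Suc n) x x') (delta' x' s y') \<le> rel_comp ot (phi (Suc n)) (\<lambda>x y. delta' x s y) x y'"
        unfolding rel_comp_def by (rule SUP_upper) simp
      also have "\<dots> \<le> (SUP y. ot (delta x s y) (phi n y y'))"
        using d2 unfolding rel_comp_def le_fun_def by blast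
      finally have h: "ot (phi (Suc n) x x') (delta' x' s y') \<le> (SUP y. ot (delta x s y) (phi n y y'))" .
      have "ot (phi (Suc n) x x') (ot (delta' x' s y') (?v y')) = ot (ot (phi (Suc n) x x') (delta' x' s y')) (?v y')"
        using crl_assoc[OF C] by metis
      also have "\<dots> \<le> ot (SUP y. ot (delta x s y) (phi n y y')) (?v y')"
        by (rule crl_mono1[OF C h])
      also have "\<dots> = ot (?v y') (SUP y. ot (delta x s y) (phi n y y'))" using crl_comm[OF C] by metis
      also have "\<dots> \<le> (SUP y. ot (?v y') (ot (delta x s y) (phi n y y')))" by (rule crl_sup[OF C])
      also have "\<dots> \<le> (SUP y. ot (delta x s y) (?u y))"
      proof (rule SUP_mono)
        fix y show "\<exists>m\<in>UNIV. ot (?v y') (ot (delta x s y) (phi n y y')) \<le> ot (delta x s m) (?u m)"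
        proof (intro bexI[of _ y])
          have "ot (?v y') (ot (delta x s y) (phi n y y')) = ot (delta x s y) (ot (phi n y y') (?v y'))"
            using crl_comm[OF C] crl_assoc[OF C] by metis
          also have "\<dots> \<le> ot (delta x s y) (?u y)"
            using comp.IH crl_mono2[OF C] by blast
          finally show "ot (?v y') (ot (delta x s y) (phi n y y')) \<le> ot (delta x s y) (?u y)" .
        qed simp
      qed
      finally show "ot (phi (Suc n) x x') (ot (delta' x' s y') (?v y')) \<le> (SUP y. ot (delta x s y) (?u y))" .
    qed
    finally show "ot (phi (Suc n) x x') (sem ot im delta' tau' (Comp s \<alpha>) x') \<le> sem ot im delta tau (Comp s \<alpha>) x"
      by (simp add: rel_set_comp_def)
  qed
next
  case (biimp n \<alpha> a)
  let ?u = "sem ot im delta tau \<alpha>" and ?v = "sem ot im delta' tau' \<alpha>"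
  have key: "ot p (biimp im a u) \<le> biimp im a v" if h1: "ot p u \<le> v" and h2: "ot p v \<le> u" for p u v
  proof -
    have A: "ot p (im a u) \<le> im a v"
    proof -
      have "ot (im a u) a \<le> u" using crl_adj[OF C] by blast
      then have "ot p (ot (im a u) a) \<le> ot p u" by (rule crl_mono2[OF C])
      then have "ot (ot p (im a u)) a \<le> v" using h1 crl_assoc[OF C] by (metis order_trans)
      then show ?thesis using crl_adj[OF C] by blast
    qed
    have B': "ot p (im u a) \<le> im v a"
    proof -
      have "ot (im u a) u \<le> a" using crl_adj[OF C] by blast
      have "ot (ot p (im u a)) v = ot (im u a) (ot p v)" using crl_assoc[OF C] crl_comm[OF C] by metis
      also have "\<dots> \<le> ot (im u a) u" using h2 by (rule crl_mono2[OF C])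
      also have "\<dots> \<le> a" using crl_adj[OF C] by blast
      finally show ?thesis using crl_adj[OF C] by blast
    qed
    have "ot p (biimp im a u) \<le> ot p (im a u)" unfolding biimp_def by (rule crl_mono2[OF C]) simp
    moreover have "ot p (biimp im a u) \<le> ot p (im u a)" unfolding biimp_def by (rule crl_mono2[OF C]) simp
    ultimately show ?thesis using A B' unfolding biimp_def by (meson inf_greatest order_trans)
  qed
  show ?case using biimp.IH key by simp
next
  case (conj n \<alpha> \<beta>)
  show ?case
  proof (intro allI conjI)
    fix x x'
    show "ot (phi n x x') (sem ot im delta tau (Conj \<alpha> \<beta>) x) \<le> sem ot im delta' tau' (Conj \<alpha> \<beta>) x'"
      using conj.IH crl_mono2[OF C, of "inf _ _" _ "phi n x x'"]
      by (simp; meson inf_le1 inf_le2 order_trans)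
    show "ot (phi n x x') (sem ot im delta' tau' (Conj \<alpha> \<beta>) x') \<le> sem ot im delta tau (Conj \<alpha> \<beta>) x"
      using conj.IH crl_mono2[OF C, of "inf _ _" _ "phi n x x'"]
      by (simp; meson inf_le1 inf_le2 order_trans)
  qed
qed

theorem mainTheorem16:
  fixes otimes imp :: "'l::complete_lattice \<Rightarrow> 'l \<Rightarrow> 'l"
    and delta :: "'a \<Rightarrow> 's \<Rightarrow> 'a \<Rightarrow> 'l" and tau :: "'a \<Rightarrow> 'l"
    and delta' :: "'b \<Rightarrow> 's \<Rightarrow> 'b \<Rightarrow> 'l" and tau' :: "'b \<Rightarrow> 'l"
    and phi :: "nat \<Rightarrow> 'a \<Rightarrow> 'b \<Rightarrow> 'l"
  assumes "complete_residuated_lattice otimes imp"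
    and "depth_bounded_bisim otimes delta tau delta' tau' phi"
  shows "(\<forall>n (\<alpha>::('l, 's) fformula). in_F n \<alpha> \<longrightarrow>
            rel_set_comp otimes (conv (phi n)) (sem otimes imp delta tau \<alpha>)
              \<le> sem otimes imp delta' tau' \<alpha> \<and>
            rel_set_comp otimes (phi n) (sem otimes imp delta' tau' \<alpha>)
              \<le> sem otimes imp delta tau \<alpha>) \<and>
         (\<forall>n x x'. phi n x x' \<le>
            (INF \<alpha> \<in> {\<alpha>::('l, 's) fformula. in_F n \<alpha>}.
               biimp imp (sem otimes imp delta tau \<alpha> x) (sem otimes imp delta' tau' \<alpha> x')))"
proof (intro conjI allI impI)
  fix n and \<alpha> :: "('l, 's) fformula" assume "in_F n \<alpha>"
  note K = core[OF assms this]
  show "rel_set_comp otimes (conv (phi n)) (sem otimes imp delta tau \<alpha>) \<le> sem otimes imp delta' tau' \<alpha>"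
    unfolding rsc_le conv_def using K by blast
  show "rel_set_comp otimes (phi n) (sem otimes imp delta' tau' \<alpha>) \<le> sem otimes imp delta tau \<alpha>"
    unfolding rsc_le using K by blast
next
  fix n x x'
  show "phi n x x' \<le> (INF \<alpha> \<in> {\<alpha>::('l, 's) fformula. in_F n \<alpha>}.
               biimp imp (sem otimes imp delta tau \<alpha> x) (sem otimes imp delta' tau' \<alpha> x'))"
  proof (rule INF_greatest)
    fix \<alpha> :: "('l, 's) fformula" assume "\<alpha> \<in> {\<alpha>. in_F n \<alpha>}"
    then have K: "otimes (phi n x x') (sem otimes imp delta tau \<alpha> x) \<le> sem otimes imp delta' tau' \<alpha> x'"
       "otimes (phi n x x') (sem otimes imp delta' tau' \<alpha> x') \<le> sem otimes imp delta tau \<alpha> x"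
      using core[OF assms] by auto
    then show "phi n x x' \<le> biimp imp (sem otimes imp delta tau \<alpha> x) (sem otimes imp delta' tau' \<alpha> x')"
      unfolding biimp_def using crl_adj[OF assms(1)] crl_comm[OF assms(1)] by (metis le_inf_iff)
  qed
qed

end
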